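(* Let $M=\Pi\backslash\mathrm{Sol}_1^4$ be an infra-$\mathrm{Sol}_1^4$ manifold with $\Pi\subset\mathrm{Sol}_1^4\rtimes D_4$, and let $s$ be its translational involution. Then either $s$ acts freely on $M$, or every component of the fixed point set of $s$ is $2$-dimensional.
   Context: $\mathrm{Sol}_1^4$ is the group of real matrices $\begin{pmatrix}1&e^ux&z\\0&e^u&y\\0&0&1\end{pmatrix}$; its center is $\{x=y=u=0\}\cong\mathbb{R}$. $D_4\subset\mathrm{Aut}(\mathrm{Sol}_1^4)$ is the group of $8$ automorphisms given, for $A=\begin{pmatrix}a&b\\c&d\end{pmatrix}\in\{\begin{pmatrix}\pm1&0\\0&\pm1\end{pmatrix},\begin{pmatrix}0&\pm1\\\pm1&0\end{pmatrix}\}$, by $\begin{pmatrix}1&e^ux&z\\0&e^u&y\\0&0&1\end{pmatrix}\mapsto\begin{pmatrix}1&e^{\bar Au}(ax+by)&\tfrac12(acx^2+2bcxy+bdy^2+2(ad-bc)z)\\0&e^{\bar Au}&cx+dy\\0&0&1\end{pmatrix}$, $\bar A=+1$ for diagonal $A$ and $-1$ otherwise. An infra-$\mathrm{Sol}_1^4$ manifold is $M=\Pi\backslash\mathrm{Sol}_1^4$ with $\Pi$ a discrete, cocompact, torsion-free subgroup of $\mathrm{Sol}_1^4\rtimes D_4$ acting by $(a,A)\cdot g=a\,A(g)$. The intersection of $\Pi$ with the center is infinite cyclic, generated by the central element with $z=1/q$ ($q>0$). Let $s$ be the central element with $z=1/(2q)$; for every $\alpha\in\Pi$ one has $s\alpha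 s^{-1}=\alpha$ or $s\alpha s^{-1}=s^2\alpha$, so $s$ normalizes $\Pi$ and its action on $\mathrm{Sol}_1^4$ descends to an involution of $M$, called the translational involution. *)

theory Defs
  imports "HOL-Analysis.Analysis"
begin

text \<open>Elements of Sol_1^4 are encoded by their coordinates (x,y,z,u), standing for the matrix
  [[1, e^u x, z],[0, e^u, y],[0,0,1]].  Matrix multiplication gives the law below.\<close>

type_synonym sol = "real \<times> real \<times> real \<times> real"

fun sol_mult :: "sol \<Rightarrow> sol \<Rightarrow> sol" where
  "sol_mult (x, y, z, u) (x', y', z', u') =
     (x + exp (- u) * x', y + exp u * y', z + z' + exp u * x * y', u + u')"

definition sol_one :: sol where "sol_one = (0, 0, 0, 0)"

text \<open>Integer 2x2 matrices (a,b,c,d) = [[a,b],[c,d]].\<close>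
type_synonym mat2 = "int \<times> int \<times> int \<times> int"

definition D4 :: "mat2 set" where
  "D4 = {(a, 0, 0, d) | a d. \<bar>a\<bar> = 1 \<and> \<bar>d\<bar> = 1} \<union> {(0, b, c, 0) | b c. \<bar>b\<bar> = 1 \<and> \<bar>c\<bar> = 1}"

definition mat2_one :: mat2 where "mat2_one = (1, 0, 0, 1)"

fun mat2_mult :: "mat2 \<Rightarrow> mat2 \<Rightarrow> mat2" where
  "mat2_mult (a, b, c, d) (a', b', c', d') =
     (a * a' + b * c', a * b' + b * d', c * a' + d * c', c * b' + d * d')"

fun Abar :: "mat2 \<Rightarrow> real" where
  "Abar (a, b, c, d) = (if b = 0 \<and> c = 0 then 1 else -1)"

fun sol_aut :: "mat2 \<Rightarrow> sol \<Rightarrow> sol" where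
  "sol_aut (a, b, c, d) (x, y, z, u) =
     (of_int a * x + of_int b * y,
      of_int c * x + of_int d * y,
      (of_int (a * c) * x\<^sup>2 + 2 * of_int (b * c) * x * y + of_int (b * d) * y\<^sup>2
         + 2 * of_int (a * d - b * c) * z) / 2,
      Abar (a, b, c, d) * u)"

type_synonym aff = "sol \<times> mat2"

fun aff_mult :: "aff \<Rightarrow> aff \<Rightarrow> aff" where
  "aff_mult (a, A) (b, B) = (sol_mult a (sol_aut A b), mat2_mult A B)"

definition aff_one :: aff where "aff_one = (sol_one, mat2_one)"

fun aff_pow :: "aff \<Rightarrow> nat \<Rightarrow> aff" where
  "aff_pow p 0 = aff_one"
| "aff_pow p (Suc n) = aff_mult p (aff_pow p n)"

fun aff_act :: "aff \<Rightarrow> sol \<Rightarrow> sol" where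
  "aff_act (a, A) g = sol_mult a (sol_aut A g)"

text \<open>\<Gamma> is a discrete, cocompact, torsion-free subgroup of Sol_1^4 \<rtimes> D4
  (topology on Sol_1^4: Euclidean topology in the coordinates (x,y,z,u); D4 discrete).\<close>
definition infra_sol_group :: "aff set \<Rightarrow> bool" where
  "infra_sol_group \<Gamma> \<longleftrightarrow>
     \<Gamma> \<subseteq> UNIV \<times> D4 \<and>
     aff_one \<in> \<Gamma> \<and>
     (\<forall>p\<in>\<Gamma>. \<forall>q\<in>\<Gamma>. aff_mult p q \<in> \<Gamma>) \<and>
     (\<forall>p\<in>\<Gamma>. \<exists>q\<in>\<Gamma>. aff_mult p q = aff_one) \<and>
     (\<forall>p\<in>\<Gamma>. \<exists>e>0. \<forall>p'\<in>\<Gamma>. snd p' = snd p \<and> dist (fst p') (fst p) < e \<longrightarrow> p' = p) \<and>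
     (\<exists>K. compact K \<and> (\<Union>p\<in>\<Gamma>. aff_act p ` K) = UNIV) \<and>
     (\<forall>p\<in>\<Gamma>. \<forall>n>0. aff_pow p n = aff_one \<longrightarrow> p = aff_one)"

definition orbit :: "aff set \<Rightarrow> sol \<Rightarrow> sol set" where
  "orbit \<Gamma> g = (\<lambda>p. aff_act p g) ` \<Gamma>"

definition orbit_space :: "aff set \<Rightarrow> sol set set" where
  "orbit_space \<Gamma> = range (orbit \<Gamma>)"

definition M_top :: "aff set \<Rightarrow> sol set topology" where
  "M_top \<Gamma> = topology (\<lambda>U. U \<subseteq> orbit_space \<Gamma> \<and> open (\<Union>U))"

definition central :: "real \<Rightarrow> sol" where "central z = (0, 0, z, 0)"

definition fixed_set :: "aff set \<Rightarrow> sol \<Rightarrow> sol set set" where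
  "fixed_set \<Gamma> s = {orbit \<Gamma> g | g. orbit \<Gamma> (sol_mult s g) = orbit \<Gamma> g}"

definition two_dimensional :: "'a topology \<Rightarrow> bool" where
  "two_dimensional X \<longleftrightarrow>
     (\<forall>p\<in>topspace X. \<exists>U. openin X U \<and> p \<in> U \<and>
        subtopology X U homeomorphic_space (euclidean :: (real \<times> real) topology))"

end

theory Submission
  imports Defs
begin

lemma e: "\<bar>a::int\<bar> = 1 \<longleftrightarrow> a = 1 \<or> a = -1" by arith

lemma D4_enum: "D4 = {(1,0,0,1),(1,0,0,-1),(-1,0,0,1),(-1,0,0,-1),(0,1,1,0),(0,1,-1,0),(0,-1,1,0),(0,-1,-1,0)}"
  unfolding D4_def e by auto

lemma sol_mult_assoc: "sol_mult (sol_mult a b) c = sol_mult a (sol_mult b c)"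
  by (cases a; cases b; cases c) (simp add: algebra_simps flip: exp_add)

lemma aut_mult: "A \<in> D4 \<Longrightarrow> sol_aut A (sol_mult g h) = sol_mult (sol_aut A g) (sol_aut A h)"
  unfolding D4_enum
  by (cases g; cases h) (auto simp: exp_minus field_simps power2_eq_square)

lemma aut_comp: "A \<in> D4 \<Longrightarrow> B \<in> D4 \<Longrightarrow> sol_aut (mat2_mult A B) g = sol_aut A (sol_aut B g)"
  unfolding D4_enum
  by (cases g) (auto simp: field_simps power2_eq_square)

lemma D4_mult: "A \<in> D4 \<Longrightarrow> B \<in> D4 \<Longrightarrow> mat2_mult A B \<in> D4"
  unfolding D4_enum by auto

lemma aut_one: "sol_aut mat2_one g = g"
  by (cases g) (simp add: mat2_one_def)

lemma aut_sol_one: "sol_aut A sol_one = sol_one"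
  by (cases A) (simp add: sol_one_def)

lemma mult_one[simp]: "sol_mult sol_one g = g" "sol_mult g sol_one = g"
  by (cases g; simp add: sol_one_def)+

lemma act_one[simp]: "aff_act aff_one g = g"
  by (simp add: aff_one_def aut_one)

lemma act_mult: assumes that: "snd p \<in> D4" "snd q \<in> D4" shows "aff_act (aff_mult p q) g = aff_act p (aff_act q g)"
proof -
  obtain a A where p: "p = (a, A)" by (cases p)
  obtain b B where q: "q = (b, B)" by (cases q)
  have A: "A \<in> D4" "B \<in> D4" using that unfolding p q by simp_all
  have c: "sol_aut (mat2_mult A B) g = sol_aut A (sol_aut B g)" by (rule aut_comp[OF A])
  have "aff_act (aff_mult p q) g = sol_mult (sol_mult a (sol_aut A b)) (sol_aut A (sol_aut B g))"
    unfolding p q aff_mult.simps aff_act.simps c by (rule refl)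
  also have "\<dots> = aff_act p (aff_act q g)"
    unfolding p q aff_act.simps aut_mult[OF A(1)] sol_mult_assoc by (rule refl)
  finally show ?thesis .
qed


lemma sol_right_cancel_one: "sol_mult c g = g \<Longrightarrow> c = sol_one"
  by (cases c; cases g) (auto simp: sol_one_def)

definition detA :: "mat2 \<Rightarrow> int" where "detA A = (case A of (a,b,c,d) \<Rightarrow> a*d - b*c)"

lemma aut_central: "A \<in> D4 \<Longrightarrow> sol_aut A (sol_mult (central t) h) = sol_mult (central (of_int (detA A) * t)) (sol_aut A h)"
  unfolding D4_enum by (cases h) (auto simp: central_def detA_def)

lemma detA_D4: "A \<in> D4 \<Longrightarrow> detA A = 1 \<or> detA A = -1"
  unfolding D4_enum by (auto simp: detA_def)

lemma central_add: "sol_mult (central t) (sol_mult (central t') h) = sol_mult (central (t + t')) h"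
  by (cases h) (simp add: central_def)

lemma central_comm: "sol_mult a (sol_mult (central t) h) = sol_mult (central t) (sol_mult a h)"
  by (cases a; cases h) (simp add: central_def)

lemma act_central: "A \<in> D4 \<Longrightarrow> aff_act (a, A) (sol_mult (central t) h) = sol_mult (central (of_int (detA A) * t)) (aff_act (a, A) h)"
  unfolding aff_act.simps aut_central by (rule central_comm)

lemma central_zero: "central 0 = sol_one" by (simp add: central_def sol_one_def)

lemma snd_aff_mult: "snd (aff_mult p q) = mat2_mult (snd p) (snd q)"
  by (cases p; cases q) simp

lemma D4_pow4: "A \<in> D4 \<Longrightarrow> mat2_mult A (mat2_mult A (mat2_mult A (mat2_mult A mat2_one))) = mat2_one"
  unfolding D4_enum by (auto simp: mat2_one_def)

locale infra =
  fixes \<Gamma> :: "aff set" and q :: real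
  assumes G: "infra_sol_group \<Gamma>" and qpos: "q > 0"
    and cent: "\<Gamma> \<inter> {(central z, mat2_one) | z. True} = {(central (of_int k / q), mat2_one) | k. True}"
begin

lemma sub: "p \<in> \<Gamma> \<Longrightarrow> snd p \<in> D4"
  using G unfolding infra_sol_group_def by (auto simp: mem_Times_iff)

lemma one: "aff_one \<in> \<Gamma>" using G unfolding infra_sol_group_def by auto
lemma mult: "p \<in> \<Gamma> \<Longrightarrow> r \<in> \<Gamma> \<Longrightarrow> aff_mult p r \<in> \<Gamma>" using G unfolding infra_sol_group_def by auto
lemma rinv: "p \<in> \<Gamma> \<Longrightarrow> \<exists>r\<in>\<Gamma>. aff_mult p r = aff_one" using G unfolding infra_sol_group_def by auto
lemma disc: "p \<in> \<Gamma> \<Longrightarrow> \<exists>e>0. \<forall>p'\<in>\<Gamma>. snd p' = snd p \<and> dist (fst p') (fst p) < e \<longrightarrow> p' = p"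
  using G unfolding infra_sol_group_def by auto
lemma torsion: "p \<in> \<Gamma> \<Longrightarrow> n > 0 \<Longrightarrow> aff_pow p n = aff_one \<Longrightarrow> p = aff_one"
  using G unfolding infra_sol_group_def by auto

lemma actm: "p \<in> \<Gamma> \<Longrightarrow> r \<in> \<Gamma> \<Longrightarrow> aff_act (aff_mult p r) g = aff_act p (aff_act r g)"
  by (rule act_mult) (auto intro: sub)

lemma inv_act: assumes "p \<in> \<Gamma>"
  shows "\<exists>p'\<in>\<Gamma>. (\<forall>g. aff_act p (aff_act p' g) = g) \<and> (\<forall>g. aff_act p' (aff_act p g) = g)"
proof -
  obtain p' where p': "p' \<in> \<Gamma>" "aff_mult p p' = aff_one" using rinv[OF assms] by blast
  obtain p'' where p'': "p'' \<in> \<Gamma>" "aff_mult p' p'' = aff_one" using rinv[OF p'(1)] by blast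
  have 1: "aff_act p (aff_act p' g) = g" for g using actm[OF assms p'(1), of g] p'(2) by simp
  have 2: "aff_act p' (aff_act p'' g) = g" for g using actm[OF p'(1) p''(1), of g] p''(2) by simp
  have 3: "aff_act p g = aff_act p'' g" for g using 1[of "aff_act p'' g"] 2[of g] by simp
  show ?thesis using p'(1) 1 2 3 by metis
qed

lemma pow_in: "p \<in> \<Gamma> \<Longrightarrow> aff_pow p n \<in> \<Gamma>"
  by (induction n) (auto simp: one mult)

lemma pow_fix: "p \<in> \<Gamma> \<Longrightarrow> aff_act p g = g \<Longrightarrow> aff_act (aff_pow p n) g = g"
  by (induction n) (auto simp: actm pow_in)

lemma stab: assumes "p \<in> \<Gamma>" "aff_act p g = g" shows "p = aff_one"
proof -
  have A: "snd p \<in> D4" using sub assms by blast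
  have s4: "snd (aff_pow p 4) = mat2_one"
    using D4_pow4[OF A] by (simp add: numeral_eq_Suc snd_aff_mult aff_one_def)
  obtain c where c: "aff_pow p 4 = (c, mat2_one)" using s4 by (metis prod.collapse)
  have "aff_act (aff_pow p 4) g = g" by (rule pow_fix[OF assms])
  hence "sol_mult c g = g" by (simp add: c aut_one)
  hence "c = sol_one" by (rule sol_right_cancel_one)
  hence "aff_pow p 4 = aff_one" by (simp add: c aff_one_def)
  thus ?thesis using torsion[OF assms(1), of 4] by simp
qed

definition sc :: sol where "sc = central (1 / (2 * q))"

lemma s2_in: "(central (1/q), mat2_one) \<in> \<Gamma>"
proof -
  have "(central (of_int 1 / q), mat2_one) \<in> {(central (of_int k / q), mat2_one) | k. True}" by blast
  thus ?thesis using cent by auto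
qed

lemma sc_notin: "(sc, mat2_one) \<notin> \<Gamma>"
proof
  assume "(sc, mat2_one) \<in> \<Gamma>"
  hence "(sc, mat2_one) \<in> \<Gamma> \<inter> {(central z, mat2_one) | z. True}" unfolding sc_def by blast
  hence "(sc, mat2_one) \<in> {(central (of_int k / q), mat2_one) | k. True}" using cent by (simp only:)
  then obtain k :: int where "central (1 / (2 * q)) = central (of_int k / q)" unfolding sc_def by auto
  hence "1 / (2 * q) = of_int k / q" by (simp add: central_def)
  hence "1 = 2 * (of_int k::real)" using qpos by (simp add: field_simps)
  hence "(1::int) = 2 * k" by linarith
  thus False by presburger
qed

lemma s_conj: assumes "r \<in> \<Gamma>" shows "\<exists>r''\<in>\<Gamma>. \<forall>h. sol_mult sc (aff_act r h) = aff_act r'' (sol_mult sc h)"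
proof -
  obtain a A where r: "r = (a, A)" by (cases r)
  have A: "A \<in> D4" using sub assms r by fastforce
  show ?thesis
  proof (cases "detA A = 1")
    case True
    have "sol_mult sc (aff_act r h) = aff_act r (sol_mult sc h)" for h
      unfolding r sc_def act_central[OF A] True by simp
    thus ?thesis using assms by blast
  next
    case False
    hence d: "detA A = -1" using detA_D4[OF A] by simp
    let ?s2 = "(central (1/q), mat2_one)"
    have "sol_mult sc (aff_act r h) = aff_act (aff_mult ?s2 r) (sol_mult sc h)" for h
    proof -
      have "aff_act (aff_mult ?s2 r) (sol_mult sc h) = aff_act ?s2 (aff_act r (sol_mult sc h))"
        by (rule actm[OF s2_in assms])
      also have "\<dots> = sol_mult (central (1/q)) (sol_mult (central (- (1 / (2 * q)))) (aff_act r h))"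
        unfolding r sc_def act_central[OF A] d by (simp add: aut_one)
      also have "\<dots> = sol_mult sc (aff_act r h)"
        unfolding central_add sc_def using qpos by (simp add: field_simps)
      finally show ?thesis by simp
    qed
    thus ?thesis using mult[OF s2_in assms] by blast
  qed
qed

end

context infra begin

lemma orbit_iff: "y \<in> orbit \<Gamma> g \<longleftrightarrow> (\<exists>p\<in>\<Gamma>. y = aff_act p g)"
  unfolding orbit_def by auto

lemma orbit_self: "g \<in> orbit \<Gamma> g"
  unfolding orbit_iff using one by (metis act_one)

lemma orbit_trans: "h \<in> orbit \<Gamma> g \<Longrightarrow> y \<in> orbit \<Gamma> h \<Longrightarrow> y \<in> orbit \<Gamma> g"
  unfolding orbit_iff by (metis actm mult)

lemma orbit_sym: "h \<in> orbit \<Gamma> g \<Longrightarrow> g \<in> orbit \<Gamma> h"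
  unfolding orbit_iff by (metis inv_act)

lemma orbit_eq: "h \<in> orbit \<Gamma> g \<Longrightarrow> orbit \<Gamma> h = orbit \<Gamma> g"
  by (meson orbit_sym orbit_trans subsetI subset_antisym)

lemma orbit_eq_iff: "orbit \<Gamma> g = orbit \<Gamma> h \<longleftrightarrow> h \<in> orbit \<Gamma> g"
  by (metis orbit_eq orbit_self)

definition Fx :: "sol set" where "Fx = {h. \<exists>p\<in>\<Gamma>. aff_act p h = sol_mult sc h}"

lemma fixed_iff: "orbit \<Gamma> h \<in> fixed_set \<Gamma> sc \<longleftrightarrow> h \<in> Fx"
proof
  assume "h \<in> Fx"
  then obtain p where "p \<in> \<Gamma>" "aff_act p h = sol_mult sc h" unfolding Fx_def by auto
  hence "sol_mult sc h \<in> orbit \<Gamma> h" unfolding orbit_iff by metis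
  hence "orbit \<Gamma> (sol_mult sc h) = orbit \<Gamma> h" by (rule orbit_eq)
  thus "orbit \<Gamma> h \<in> fixed_set \<Gamma> sc" unfolding fixed_set_def by blast
next
  assume "orbit \<Gamma> h \<in> fixed_set \<Gamma> sc"
  then obtain g where g: "orbit \<Gamma> h = orbit \<Gamma> g" "orbit \<Gamma> (sol_mult sc g) = orbit \<Gamma> g"
    unfolding fixed_set_def by auto
  have "h \<in> orbit \<Gamma> g" using g(1) orbit_self by blast
  then obtain r where r: "r \<in> \<Gamma>" "h = aff_act r g" unfolding orbit_iff by auto
  obtain r'' where r'': "r'' \<in> \<Gamma>" "\<And>h. sol_mult sc (aff_act r h) = aff_act r'' (sol_mult sc h)"
    using s_conj[OF r(1)] by blast
  have sg: "sol_mult sc g \<in> orbit \<Gamma> g" using g(2) orbit_self by blast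
  have "sol_mult sc h = aff_act r'' (sol_mult sc g)" using r r'' by simp
  hence "sol_mult sc h \<in> orbit \<Gamma> (sol_mult sc g)" using r''(1) unfolding orbit_iff by blast
  hence "sol_mult sc h \<in> orbit \<Gamma> h" using orbit_trans[OF sg] g(1) by simp
  then obtain p where "p \<in> \<Gamma>" "sol_mult sc h = aff_act p h" unfolding orbit_iff by blast
  thus "h \<in> Fx" unfolding Fx_def by (metis (mono_tags, lifting) mem_Collect_eq)
qed

lemma fixed_set_eq: "fixed_set \<Gamma> sc = orbit \<Gamma> ` Fx"
proof -
  have "fixed_set \<Gamma> sc \<subseteq> range (orbit \<Gamma>)" unfolding fixed_set_def by auto
  thus ?thesis using fixed_iff by blast
qed

lemma istop: "istopology (\<lambda>U. U \<subseteq> orbit_space \<Gamma> \<and> open (\<Union>U))"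
  unfolding istopology_def
proof (rule conjI; intro allI impI)
  fix S T assume S: "S \<subseteq> orbit_space \<Gamma> \<and> open (\<Union>S)" and T: "T \<subseteq> orbit_space \<Gamma> \<and> open (\<Union>T)"
  have "\<Union>(S \<inter> T) = \<Union>S \<inter> \<Union>T"
  proof
    show "\<Union>(S \<inter> T) \<subseteq> \<Union>S \<inter> \<Union>T" by auto
  next
    show "\<Union>S \<inter> \<Union>T \<subseteq> \<Union>(S \<inter> T)"
    proof
      fix x assume "x \<in> \<Union>S \<inter> \<Union>T"
      then obtain X Y where XY: "X \<in> S" "Y \<in> T" "x \<in> X" "x \<in> Y" by auto
      obtain g h where "X = orbit \<Gamma> g" "Y = orbit \<Gamma> h" using XY S T unfolding orbit_space_def by blast
      hence "X = Y" using XY orbit_eq by metis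
      thus "x \<in> \<Union>(S \<inter> T)" using XY by auto
    qed
  qed
  thus "S \<inter> T \<subseteq> orbit_space \<Gamma> \<and> open (\<Union>(S \<inter> T))" using S T by auto
next
  fix K assume asm: "\<forall>U\<in>K. U \<subseteq> orbit_space \<Gamma> \<and> open (\<Union>U)"
  have "\<Union>(\<Union>K) = (\<Union>U\<in>K. \<Union>U)" by blast
  moreover have "open (\<Union>U\<in>K. \<Union>U)" using asm by (intro open_UN) auto
  ultimately show "\<Union>K \<subseteq> orbit_space \<Gamma> \<and> open (\<Union>(\<Union>K))" using asm by auto
qed

lemma openin_M: "openin (M_top \<Gamma>) U \<longleftrightarrow> U \<subseteq> orbit_space \<Gamma> \<and> open (\<Union>U)"
  unfolding M_top_def using istop by simp

lemma topspace_M: "topspace (M_top \<Gamma>) = orbit_space \<Gamma>"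
proof -
  have "openin (M_top \<Gamma>) (orbit_space \<Gamma>)"
    unfolding openin_M orbit_space_def using orbit_self by (metis UNIV_I open_UNIV subsetI UnionI rangeI subset_antisym top_greatest)
  thus ?thesis using openin_subset[of "M_top \<Gamma>"] openin_M by (metis openin_topspace subset_antisym)
qed

end

fun sol_inv :: "sol \<Rightarrow> sol" where
  "sol_inv (x, y, z, u) = (- exp u * x, - exp (- u) * y, x * y - z, - u)"

lemma sol_inv_l: "sol_mult (sol_inv a) a = sol_one"
  by (cases a) (simp add: sol_one_def exp_minus field_simps)

lemma sol_cancel_r: "sol_mult (sol_mult a y) (sol_inv y) = a"
  by (cases a; cases y) (simp add: exp_add exp_diff exp_minus field_simps)

lemma sol_cancel_l: "sol_mult (sol_inv a) (sol_mult a y) = y"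
  by (cases a; cases y) (simp add: exp_minus field_simps)

definition mtr :: "mat2 \<Rightarrow> mat2" where "mtr A = (case A of (a,b,c,d) \<Rightarrow> (a,c,b,d))"

lemma mtr_unique: "A \<in> D4 \<Longrightarrow> B \<in> D4 \<Longrightarrow> mat2_mult A B = mat2_one \<Longrightarrow> B = mtr A"
  unfolding D4_enum by (auto simp: mat2_one_def mtr_def)

lemma mtr_l: "A \<in> D4 \<Longrightarrow> mat2_mult (mtr A) A = mat2_one"
  unfolding D4_enum by (auto simp: mat2_one_def mtr_def)

lemma mtr_aut: "A \<in> D4 \<Longrightarrow> sol_aut (mtr A) (sol_aut A v) = v"
  unfolding D4_enum by (cases v) (auto simp: mtr_def power2_eq_square field_simps)

lemma fst_act: "fst p = aff_act p sol_one"
  by (cases p) (simp add: aut_sol_one)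

lemma sol_mult_alt: "sol_mult g h = (fst g + exp (- snd (snd (snd g))) * fst h,
   fst (snd g) + exp (snd (snd (snd g))) * fst (snd h),
   fst (snd (snd g)) + fst (snd (snd h)) + exp (snd (snd (snd g))) * fst g * fst (snd h),
   snd (snd (snd g)) + snd (snd (snd h)))"
  by (cases g; cases h) simp

lemma sol_inv_alt: "sol_inv g = (- exp (snd (snd (snd g))) * fst g, - exp (- snd (snd (snd g))) * fst (snd g),
   fst g * fst (snd g) - fst (snd (snd g)), - snd (snd (snd g)))"
  by (cases g) simp

lemma sol_aut_alt: "sol_aut (a,b,c,d) g = (of_int a * fst g + of_int b * fst (snd g),
      of_int c * fst g + of_int d * fst (snd g),
      (of_int (a * c) * (fst g)\<^sup>2 + 2 * of_int (b * c) * fst g * fst (snd g) + of_int (b * d) * (fst (snd g))\<^sup>2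
         + 2 * of_int (a * d - b * c) * fst (snd (snd g))) * (1/2),
      Abar (a, b, c, d) * snd (snd (snd g)))"
  by (cases g) (simp add: field_simps)

lemma cont_mult[continuous_intros]: assumes "continuous_on S f" "continuous_on S g" shows "continuous_on S (\<lambda>x. sol_mult (f x) (g x))"
  unfolding sol_mult_alt by (intro continuous_on_Pair continuous_on_add continuous_on_diff continuous_on_minus continuous_on_mult continuous_on_const continuous_on_fst continuous_on_snd continuous_on_power continuous_on_exp assms)

lemma cont_inv[continuous_intros]: assumes "continuous_on S f" shows "continuous_on S (\<lambda>x. sol_inv (f x))"
  unfolding sol_inv_alt by (intro continuous_on_Pair continuous_on_add continuous_on_diff continuous_on_minus continuous_on_mult continuous_on_const continuous_on_fst continuous_on_snd continuous_on_power continuous_on_exp assms)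

lemma cont_aut[continuous_intros]: assumes "continuous_on S f" shows "continuous_on S (\<lambda>x. sol_aut A (f x))"
proof -
  obtain a b c d where A: "A = (a,b,c,d)" by (cases A)
  show ?thesis unfolding A sol_aut_alt by (intro continuous_on_Pair continuous_on_add continuous_on_diff continuous_on_minus continuous_on_mult continuous_on_const continuous_on_fst continuous_on_snd continuous_on_power continuous_on_exp assms)
qed

lemma cont_act[continuous_intros]: assumes "continuous_on S f" shows "continuous_on S (\<lambda>x. aff_act p (f x))"
proof -
  obtain a A where p: "p = (a, A)" by (cases p)
  show ?thesis unfolding p aff_act.simps by (intro cont_mult cont_aut continuous_on_const assms)
qed

lemma dist_pair_le: "dist (a, b) (c, d) \<le> dist a c + dist b d"
  unfolding dist_Pair_Pair using sqrt_sum_squares_le_sum_abs[of "dist a c" "dist b d"] by simp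


lemma dist4_le: "dist (a, b, c, d) (a', b', c', d') \<le> dist a a' + dist b b' + dist c c' + dist d d'"
proof -
  have "dist (a, b, c, d) (a', b', c', d') \<le> dist a a' + dist (b, c, d) (b', c', d')" by (rule dist_pair_le)
  also have "dist (b, c, d) (b', c', d') \<le> dist b b' + dist (c, d) (c', d')" by (rule dist_pair_le)
  also have "dist (c, d) (c', d') \<le> dist c c' + dist d d'" by (rule dist_pair_le)
  finally show ?thesis by simp
qed

context infra begin

lemma disc_one: obtains e0 where "e0 > 0" "\<And>p'. p' \<in> \<Gamma> \<Longrightarrow> snd p' = mat2_one \<Longrightarrow> dist (fst p') sol_one < e0 \<Longrightarrow> p' = aff_one"
  using disc[OF one] unfolding aff_one_def by auto

lemma act_inv_formula:
  assumes r1: "r1 \<in> \<Gamma>" "snd r1 = A" and r1': "r1' \<in> \<Gamma>" "aff_mult r1 r1' = aff_one"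
  shows "aff_act r1' y = sol_aut (mtr A) (sol_mult (sol_inv (fst r1)) y)"
proof -
  have A: "A \<in> D4" using sub r1 by blast
  have "aff_act r1 (aff_act r1' y) = y" using actm[OF r1(1) r1'(1), of y] r1'(2) by simp
  hence "sol_mult (fst r1) (sol_aut A (aff_act r1' y)) = y" using r1(2) by (cases r1) simp
  hence "sol_aut A (aff_act r1' y) = sol_mult (sol_inv (fst r1)) y" using sol_cancel_l by metis
  hence "sol_aut (mtr A) (sol_aut A (aff_act r1' y)) = sol_aut (mtr A) (sol_mult (sol_inv (fst r1)) y)" by simp
  thus ?thesis using mtr_aut[OF A] by simp
qed

lemma fst_from_act: "snd r = A \<Longrightarrow> fst r = sol_mult (aff_act r h) (sol_inv (sol_aut A h))"
  by (cases r) (simp add: sol_cancel_r)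

lemma step1:
  assumes A: "A \<in> D4"
  shows "\<exists>\<delta>>0. \<forall>r1\<in>\<Gamma>. \<forall>r2\<in>\<Gamma>. \<forall>h1 h2. snd r1 = A \<longrightarrow> snd r2 = A \<longrightarrow> dist h1 g < \<delta> \<longrightarrow> dist h2 g < \<delta>
          \<longrightarrow> dist (aff_act r1 h1) k0 < \<delta> \<longrightarrow> dist (aff_act r2 h2) k0 < \<delta> \<longrightarrow> (\<forall>x. aff_act r1 x = aff_act r2 x)"
proof -
  obtain e0 where e0: "e0 > 0" "\<And>p'. p' \<in> \<Gamma> \<Longrightarrow> snd p' = mat2_one \<Longrightarrow> dist (fst p') sol_one < e0 \<Longrightarrow> p' = aff_one"
    using disc_one by blast
  define \<Psi> :: "sol \<times> sol \<times> sol \<times> sol \<Rightarrow> sol" where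
    "\<Psi> = (\<lambda>w. sol_aut (mtr A) (sol_mult (sol_inv (sol_mult (fst (snd w)) (sol_inv (sol_aut A (fst w)))))
                 (sol_mult (fst (snd (snd w))) (sol_inv (sol_aut A (snd (snd (snd w))))))))"
  have cont: "continuous_on UNIV \<Psi>" unfolding \<Psi>_def
    by (intro cont_aut cont_mult cont_inv continuous_on_fst continuous_on_snd continuous_on_id)
  define w0 where "w0 = (g, k0, k0, g)"
  have base: "\<Psi> w0 = sol_one" unfolding \<Psi>_def w0_def by (simp add: sol_inv_l aut_sol_one)
  obtain d where d: "d > 0" "\<And>w. dist w w0 < d \<Longrightarrow> dist (\<Psi> w) sol_one < e0"
    using cont e0(1) base unfolding continuous_on_iff by (metis UNIV_I)
  show ?thesis
  proof (intro exI[of _ "d/4"] conjI ballI allI impI)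
    show "d/4 > 0" using d by simp
    fix r1 r2 h1 h2 x
    assume r: "r1 \<in> \<Gamma>" "r2 \<in> \<Gamma>" "snd r1 = A" "snd r2 = A" and ds: "dist h1 g < d/4" "dist h2 g < d/4"
      "dist (aff_act r1 h1) k0 < d/4" "dist (aff_act r2 h2) k0 < d/4"
    obtain r1' where r1': "r1' \<in> \<Gamma>" "aff_mult r1 r1' = aff_one" using rinv[OF r(1)] by blast
    have "mat2_mult A (snd r1') = mat2_one" using r1'(2) r(3) snd_aff_mult[of r1 r1'] by (simp add: aff_one_def)
    hence sr1': "snd r1' = mtr A" using mtr_unique[OF A sub[OF r1'(1)]] by simp
    define t where "t = aff_mult r1' r2"
    have tG: "t \<in> \<Gamma>" unfolding t_def using mult r1' r by blast
    have st: "snd t = mat2_one" unfolding t_def snd_aff_mult sr1' r(4) using mtr_l[OF A] .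
    have "fst t = aff_act r1' (aff_act r2 sol_one)" unfolding t_def fst_act[of "aff_mult r1' r2"] using actm[OF r1'(1) r(2)] by simp
    also have "aff_act r2 sol_one = fst r2" by (simp add: fst_act)
    also have "aff_act r1' (fst r2) = sol_aut (mtr A) (sol_mult (sol_inv (fst r1)) (fst r2))"
      by (rule act_inv_formula[OF r(1) r(3) r1'])
    also have "\<dots> = \<Psi> (h1, aff_act r1 h1, aff_act r2 h2, h2)"
      unfolding \<Psi>_def using fst_from_act[OF r(3), of h1] fst_from_act[OF r(4), of h2] by simp
    finally have ft: "fst t = \<Psi> (h1, aff_act r1 h1, aff_act r2 h2, h2)" .
    have "dist (h1, aff_act r1 h1, aff_act r2 h2, h2) w0 < d"
      unfolding w0_def using dist4_le[of h1 "aff_act r1 h1" "aff_act r2 h2" h2 g k0 k0 g] ds by linarith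
    hence "dist (fst t) sol_one < e0" using d(2) ft by simp
    hence t1: "t = aff_one" using e0(2)[OF tG st] by simp
    have "aff_act r2 x = aff_act r1 (aff_act r1' (aff_act r2 x))" using actm[OF r(1) r1'(1)] r1'(2) by simp
    also have "\<dots> = aff_act r1 (aff_act t x)" unfolding t_def using actm[OF r1'(1) r(2)] by simp
    finally show "aff_act r1 x = aff_act r2 x" using t1 by simp
  qed
qed

lemma step2:
  assumes A: "A \<in> D4"
  shows "\<exists>\<delta>>0. \<forall>r\<in>\<Gamma>. \<forall>h. snd r = A \<longrightarrow> dist h g < \<delta> \<longrightarrow> dist (aff_act r h) k0 < \<delta> \<longrightarrow> aff_act r g = k0"
proof -
  obtain d1 where d1: "d1 > 0" "\<And>r1 r2 h1 h2 x. r1\<in>\<Gamma> \<Longrightarrow> r2\<in>\<Gamma> \<Longrightarrow> snd r1 = A \<Longrightarrow> snd r2 = A \<Longrightarrow> dist h1 g < d1 \<Longrightarrow> dist h2 g < d1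
          \<Longrightarrow> dist (aff_act r1 h1) k0 < d1 \<Longrightarrow> dist (aff_act r2 h2) k0 < d1 \<Longrightarrow> aff_act r1 x = aff_act r2 x"
    using step1[OF A, of g k0] by metis
  show ?thesis
  proof (cases "\<exists>r\<in>\<Gamma>. \<exists>h. snd r = A \<and> dist h g < d1 \<and> dist (aff_act r h) k0 < d1")
    case False
    thus ?thesis using d1(1) by blast
  next
    case True
    then obtain rA hA where rA: "rA \<in> \<Gamma>" "snd rA = A" "dist hA g < d1" "dist (aff_act rA hA) k0 < d1" by blast
    show ?thesis
    proof (cases "aff_act rA g = k0")
      case True
      show ?thesis
      proof (intro exI[of _ d1] conjI ballI allI impI)
        fix r h assume "r \<in> \<Gamma>" "snd r = A" "dist h g < d1" "dist (aff_act r h) k0 < d1"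
        hence "aff_act r g = aff_act rA g" using d1(2)[OF _ rA(1) _ rA(2) _ rA(3) _ rA(4)] by blast
        thus "aff_act r g = k0" using True by simp
      qed (use d1 in auto)
    next
      case False
      define D where "D = dist (aff_act rA g) k0"
      have D: "D > 0" using False unfolding D_def by simp
      have "continuous_on UNIV (\<lambda>x. aff_act rA x)" by (intro cont_act continuous_on_id)
      then obtain \<eta> where eta: "\<eta> > 0" "\<And>h. dist h g < \<eta> \<Longrightarrow> dist (aff_act rA h) (aff_act rA g) < D/2"
        using D unfolding continuous_on_iff by (metis UNIV_I half_gt_zero)
      show ?thesis
      proof (intro exI[of _ "min d1 (min \<eta> (D/2))"] conjI ballI allI impI)
        show "min d1 (min \<eta> (D/2)) > 0" using d1 eta D by simp
        fix r h assume r: "r \<in> \<Gamma>" "snd r = A" "dist h g < min d1 (min \<eta> (D/2))" "dist (aff_act r h) k0 < min d1 (min \<eta> (D/2))"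
        have "dist h g < d1" "dist (aff_act r h) k0 < d1" using r(3,4) by auto
        hence "aff_act r h = aff_act rA h" using d1(2)[OF r(1) rA(1) r(2) rA(2) _ rA(3) _ rA(4)] by blast
        hence "dist (aff_act rA h) k0 < D/2" "dist (aff_act rA h) (aff_act rA g) < D/2" using r eta(2)[of h] by auto
        hence "D < D" unfolding D_def using dist_triangle[of "aff_act rA g" k0 "aff_act rA h"] by (simp add: dist_commute)
        thus "aff_act r g = k0" by simp
      qed
    qed
  qed
qed

lemma finite_min_delta:
  fixes P :: "'a \<Rightarrow> real \<Rightarrow> bool"
  assumes "finite S" "\<And>A. A \<in> S \<Longrightarrow> \<exists>\<delta>>0. P A \<delta>" "\<And>A \<delta> \<delta>'. P A \<delta> \<Longrightarrow> 0 < \<delta>' \<Longrightarrow> \<delta>' \<le> \<delta> \<Longrightarrow> P A \<delta>'"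
  shows "\<exists>\<delta>>0. \<forall>A\<in>S. P A \<delta>"
  using assms(1,2)
proof (induction S rule: finite_induct)
  case empty
  show ?case by (rule exI[of _ 1]) simp
next
  case (insert A S)
  obtain d1 where d1: "d1 > 0" "\<forall>B\<in>S. P B d1" using insert by blast
  obtain d2 where d2: "d2 > 0" "P A d2" using insert by blast
  show ?case
    by (intro exI[of _ "min d1 d2"]) (use d1 d2 assms(3) in auto)
qed

lemma locdisc: "\<exists>\<delta>>0. \<forall>r\<in>\<Gamma>. \<forall>h. dist h g < \<delta> \<longrightarrow> dist (aff_act r h) k0 < \<delta> \<longrightarrow> aff_act r g = k0"
proof -
  have fin: "finite D4" unfolding D4_enum by simp
  have "\<exists>\<delta>>0. \<forall>A\<in>D4. \<forall>r\<in>\<Gamma>. \<forall>h. snd r = A \<longrightarrow> dist h g < \<delta> \<longrightarrow> dist (aff_act r h) k0 < \<delta> \<longrightarrow> aff_act r g = k0"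
  proof (rule finite_min_delta[OF fin step2])
    fix A and \<delta> \<delta>' :: real
    assume H: "\<forall>r\<in>\<Gamma>. \<forall>h. snd r = A \<longrightarrow> dist h g < \<delta> \<longrightarrow> dist (aff_act r h) k0 < \<delta> \<longrightarrow> aff_act r g = k0" "\<delta>' \<le> \<delta>"
    show "\<forall>r\<in>\<Gamma>. \<forall>h. snd r = A \<longrightarrow> dist h g < \<delta>' \<longrightarrow> dist (aff_act r h) k0 < \<delta>' \<longrightarrow> aff_act r g = k0"
    proof (intro ballI allI impI)
      fix r h assume a: "r \<in> \<Gamma>" "snd r = A" "dist h g < \<delta>'" "dist (aff_act r h) k0 < \<delta>'"
      have "dist h g < \<delta>" "dist (aff_act r h) k0 < \<delta>" using a(3,4) H(2) by linarith+
      thus "aff_act r g = k0" using H(1) a(1,2) by blast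
    qed
  qed auto
  then obtain \<delta> where "\<delta> > 0" "\<forall>A\<in>D4. \<forall>r\<in>\<Gamma>. \<forall>h. snd r = A \<longrightarrow> dist h g < \<delta> \<longrightarrow> dist (aff_act r h) k0 < \<delta> \<longrightarrow> aff_act r g = k0"
    by blast
  thus ?thesis using sub by blast
qed

end

context infra begin

definition chart_data :: "aff \<Rightarrow> (real \<times> real \<Rightarrow> sol) \<Rightarrow> (sol \<Rightarrow> real \<times> real) \<Rightarrow> bool" where
  "chart_data p \<phi> \<pi> \<longleftrightarrow> continuous_on UNIV \<phi> \<and> continuous_on UNIV \<pi> \<and> (\<forall>v. \<pi> (\<phi> v) = v) \<and>
     (\<forall>h. aff_act p h = sol_mult sc h \<longrightarrow> \<phi> (\<pi> h) = h) \<and> (\<forall>v. aff_act p (\<phi> v) = sol_mult sc (\<phi> v))"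

lemma sc_mult: "sol_mult sc (x, y, z, u) = (x, y, 1 / (2 * q) + z, u)"
  by (simp add: sc_def central_def)

lemmas CI = continuous_on_Pair continuous_on_add continuous_on_diff continuous_on_minus continuous_on_mult
   continuous_on_const continuous_on_fst continuous_on_snd continuous_on_id

lemma case1:
  assumes p: "p = ((x0, y0, z0, u0), (1, 0, 0, -1))" and g: "aff_act p g = sol_mult sc g"
  shows "\<exists>\<phi> \<pi>. chart_data p \<phi> \<pi>"
proof -
  obtain x y z u where gg: "g = (x, y, z, u)" by (cases g)
  have h0: "x0 = 0" "u0 = 0" using g unfolding p gg sc_mult by auto
  define c where "c = 1 / (2 * q)"
  let ?\<phi> = "\<lambda>v::real\<times>real. (fst v, y0 / 2, (z0 - c) / 2, snd v)"
  let ?\<pi> = "\<lambda>h::sol. (fst h, snd (snd (snd h)))"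
  have "chart_data p ?\<phi> ?\<pi>" unfolding chart_data_def
  proof (intro conjI allI impI)
    show "continuous_on UNIV ?\<phi>" by (intro CI)
    show "continuous_on UNIV ?\<pi>" by (intro CI)
    show "?\<pi> (?\<phi> v) = v" for v by simp
    show "?\<phi> (?\<pi> h) = h" if "aff_act p h = sol_mult sc h" for h
    proof -
      obtain x y z u where hh: "h = (x, y, z, u)" by (cases h)
      show ?thesis using that unfolding p hh sc_mult c_def by (auto simp: h0 field_simps)
    qed
    show "aff_act p (?\<phi> v) = sol_mult sc (?\<phi> v)" for v
      unfolding p sc_mult c_def by (cases v) (auto simp: h0 field_simps)
  qed
  thus ?thesis by blast
qed

lemma case2:
  assumes p: "p = ((x0, y0, z0, u0), (-1, 0, 0, 1))" and g: "aff_act p g = sol_mult sc g"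
  shows "\<exists>\<phi> \<pi>. chart_data p \<phi> \<pi>"
proof -
  obtain x y z u where gg: "g = (x, y, z, u)" by (cases g)
  have h0: "y0 = 0" "u0 = 0" using g unfolding p gg sc_mult by auto
  define c where "c = 1 / (2 * q)"
  let ?\<phi> = "\<lambda>v::real\<times>real. (x0 / 2, fst v, (z0 - c) / 2 + x0 / 2 * fst v, snd v)"
  let ?\<pi> = "\<lambda>h::sol. (fst (snd h), snd (snd (snd h)))"
  have "chart_data p ?\<phi> ?\<pi>" unfolding chart_data_def
  proof (intro conjI allI impI)
    show "continuous_on UNIV ?\<phi>" by (intro CI)
    show "continuous_on UNIV ?\<pi>" by (intro CI)
    show "?\<pi> (?\<phi> v) = v" for v by simp
    show "?\<phi> (?\<pi> h) = h" if "aff_act p h = sol_mult sc h" for h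
    proof -
      obtain x y z u where hh: "h = (x, y, z, u)" by (cases h)
      show ?thesis using that unfolding p hh sc_mult c_def by (auto simp: h0 field_simps)
    qed
    show "aff_act p (?\<phi> v) = sol_mult sc (?\<phi> v)" for v
      unfolding p sc_mult c_def by (cases v) (auto simp: h0 field_simps)
  qed
  thus ?thesis by blast
qed

lemma case3:
  assumes p: "p = ((x0, y0, z0, u0), (-1, 0, 0, -1))" and g: "aff_act p g = sol_mult sc g"
  shows "\<exists>\<phi> \<pi>. chart_data p \<phi> \<pi>"
proof -
  obtain x y z u where gg: "g = (x, y, z, u)" by (cases g)
  have h0: "u0 = 0" "x = x0 / 2" "y = y0 / 2" "z0 - x0 * y0 / 2 = 1 / (2 * q)"
    using g unfolding p gg sc_mult by (auto simp: field_simps)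
  let ?\<phi> = "\<lambda>v::real\<times>real. (x0 / 2, y0 / 2, fst v, snd v)"
  let ?\<pi> = "\<lambda>h::sol. (fst (snd (snd h)), snd (snd (snd h)))"
  have "chart_data p ?\<phi> ?\<pi>" unfolding chart_data_def
  proof (intro conjI allI impI)
    show "continuous_on UNIV ?\<phi>" by (intro CI)
    show "continuous_on UNIV ?\<pi>" by (intro CI)
    show "?\<pi> (?\<phi> v) = v" for v by simp
    show "?\<phi> (?\<pi> h) = h" if "aff_act p h = sol_mult sc h" for h
    proof -
      obtain x y z u where hh: "h = (x, y, z, u)" by (cases h)
      show ?thesis using that unfolding p hh sc_mult by (auto simp: h0 field_simps)
    qed
    show "aff_act p (?\<phi> v) = sol_mult sc (?\<phi> v)" for v
    proof -
      have h4: "z0 * 2 = x0 * y0 + 1 / q" using h0(4) qpos by (simp add: field_simps)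
      show ?thesis unfolding p sc_mult by (cases v) (auto simp: h0 h4 field_simps)
    qed
  qed
  thus ?thesis by blast
qed

lemma act_ext_mat:
  assumes A: "A \<in> D4" and B: "B \<in> D4" and eq: "\<And>x. aff_act (a, A) x = aff_act (b, B) x"
  shows "A = B"
proof -
  have "a = b" using eq[of sol_one] by (simp add: aut_sol_one)
  hence "sol_mult a (sol_aut A (1,1,0,1)) = sol_mult a (sol_aut B (1,1,0,1))" using eq[of "(1,1,0,1)"] by simp
  hence "sol_aut A (1,1,0,1) = sol_aut B (1,1,0,1)" by (metis sol_cancel_l)
  thus ?thesis using A B unfolding D4_enum by auto
qed

lemma mult_one_r: "aff_mult p aff_one = p"
  by (cases p) (simp add: aff_one_def aut_sol_one mat2_one_def)

lemma antidiag_false: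
  assumes p: "p \<in> \<Gamma>" and A: "snd p \<in> {(0,1,1,0),(0,-1,-1,0),(0,1,-1,0),(0,-1,1,0)}"
    and g: "aff_act p g = sol_mult sc g"
  shows False
proof -
  define A where "A = snd p"
  have AD: "A \<in> D4" unfolding A_def using sub p by blast
  have pA: "p = (fst p, A)" unfolding A_def by simp
  have pp: "aff_mult p p \<in> \<Gamma>" using mult p by blast
  have "aff_act (aff_mult p p) g = aff_act p (sol_mult sc g)" using actm[OF p p] g by simp
  also have "\<dots> = sol_mult (central (of_int (detA A) * (1 / (2 * q)))) (aff_act p g)"
    unfolding sc_def by (subst pA, subst act_central[OF AD], subst pA[symmetric]) (rule refl)
  also have "\<dots> = sol_mult (central ((of_int (detA A) + 1) * (1 / (2 * q)))) g"
    unfolding g sc_def central_add by (simp add: add_divide_distrib algebra_simps)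
  finally have pp_g: "aff_act (aff_mult p p) g = sol_mult (central ((of_int (detA A) + 1) * (1 / (2 * q)))) g" .
  show False
  proof (cases "detA A = -1")
    case True
    hence "aff_act (aff_mult p p) g = g" using pp_g by (simp add: central_zero)
    hence "aff_mult p p = aff_one" using stab[OF pp] by blast
    hence "aff_pow p 2 = aff_one" by (simp add: numeral_eq_Suc mult_one_r)
    hence "p = aff_one" using torsion[OF p, of 2] by simp
    thus False using A by (simp add: aff_one_def mat2_one_def)
  next
    case False
    hence d: "detA A = 1" using A unfolding A_def detA_def by auto
    have s2g: "aff_act (aff_mult p p) g = aff_act (central (1/q), mat2_one) g"
      using pp_g d qpos by (simp add: aut_one field_simps)
    obtain s2' where s2': "s2' \<in> \<Gamma>" "\<And>x. aff_act (central (1/q), mat2_one) (aff_act s2' x) = x"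
       "\<And>x. aff_act s2' (aff_act (central (1/q), mat2_one) x) = x"
      using inv_act[OF s2_in] by blast
    define t where "t = aff_mult s2' (aff_mult p p)"
    have tG: "t \<in> \<Gamma>" unfolding t_def using mult s2'(1) pp by blast
    have "aff_act t g = g" unfolding t_def actm[OF s2'(1) pp] s2g s2'(3) ..
    hence t1: "t = aff_one" using stab[OF tG] by blast
    have eqx: "aff_act (aff_mult p p) x = aff_act (central (1/q), mat2_one) x" for x
    proof -
      have "aff_act (aff_mult p p) x = aff_act (central (1/q), mat2_one) (aff_act t x)"
        unfolding t_def actm[OF s2'(1) pp] s2'(2) ..
      thus ?thesis using t1 by simp
    qed
    have "snd (aff_mult p p) = mat2_one"
      using act_ext_mat[OF sub[OF pp] sub[OF s2_in], of "fst (aff_mult p p)" "central (1/q)"] eqx by simp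
    thus False using A d unfolding A_def detA_def by (auto simp: snd_aff_mult mat2_one_def)
  qed
qed

lemma chart_exists:
  assumes "g \<in> Fx"
  shows "\<exists>p\<in>\<Gamma>. aff_act p g = sol_mult sc g \<and> (\<exists>\<phi> \<pi>. chart_data p \<phi> \<pi>)"
proof -
  obtain p where p: "p \<in> \<Gamma>" "aff_act p g = sol_mult sc g" using assms unfolding Fx_def by blast
  obtain x0 y0 z0 u0 A where pe: "p = ((x0, y0, z0, u0), A)" by (metis prod.collapse)
  have "A \<in> D4" using sub[OF p(1)] pe by simp
  hence "A = (1,0,0,1) \<or> A = (1,0,0,-1) \<or> A = (-1,0,0,1) \<or> A = (-1,0,0,-1) \<or>
     A \<in> {(0,1,1,0),(0,-1,-1,0),(0,1,-1,0),(0,-1,1,0)}" unfolding D4_enum by auto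
  moreover have "A \<noteq> (1,0,0,1)"
  proof
    assume A1: "A = (1,0,0,1)"
    have "sol_mult (x0, y0, z0, u0) g = sol_mult sc g" using p(2) pe A1 aut_one by (simp add: mat2_one_def)
    hence "(x0, y0, z0, u0) = sc" by (metis sol_cancel_r)
    thus False using p(1) pe A1 sc_notin by (simp add: mat2_one_def)
  qed
  moreover have "A \<notin> {(0,1,1,0),(0,-1,-1,0),(0,1,-1,0),(0,-1,1,0)}"
    using antidiag_false[OF p(1) _ p(2)] pe by auto
  ultimately have "A = (1,0,0,-1) \<or> A = (-1,0,0,1) \<or> A = (-1,0,0,-1)" by blast
  hence "\<exists>\<phi> \<pi>. chart_data p \<phi> \<pi>"
    using case1[of p x0 y0 z0 u0 g] case2[of p x0 y0 z0 u0 g] case3[of p x0 y0 z0 u0 g] p(2) pe by auto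
  thus ?thesis using p by blast
qed

end

context infra begin

lemma orbit_in_space: "orbit \<Gamma> x \<in> orbit_space \<Gamma>"
  unfolding orbit_space_def by simp

lemma orbit_mem_Union: "U \<subseteq> orbit_space \<Gamma> \<Longrightarrow> orbit \<Gamma> x \<in> U \<longleftrightarrow> x \<in> \<Union>U"
proof
  assume "orbit \<Gamma> x \<in> U" thus "x \<in> \<Union>U" using orbit_self by blast
next
  assume U: "U \<subseteq> orbit_space \<Gamma>" and "x \<in> \<Union>U"
  then obtain X where X: "X \<in> U" "x \<in> X" by blast
  then obtain k where "X = orbit \<Gamma> k" using U unfolding orbit_space_def by blast
  hence "orbit \<Gamma> x = X" using X orbit_eq by blast
  thus "orbit \<Gamma> x \<in> U" using X by simp
qed

lemma cont_orbit: "continuous_map euclidean (M_top \<Gamma>) (orbit \<Gamma>)"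
  unfolding continuous_map
proof (intro conjI allI impI)
  show "orbit \<Gamma> ` topspace euclidean \<subseteq> topspace (M_top \<Gamma>)" unfolding topspace_M using orbit_in_space by blast
  fix U assume "openin (M_top \<Gamma>) U"
  hence U: "U \<subseteq> orbit_space \<Gamma>" "open (\<Union>U)" unfolding openin_M by auto
  have eq: "{x \<in> topspace euclidean. orbit \<Gamma> x \<in> U} = \<Union>U"
  proof (rule set_eqI)
    fix x show "x \<in> {x \<in> topspace euclidean. orbit \<Gamma> x \<in> U} \<longleftrightarrow> x \<in> \<Union>U"
      using orbit_mem_Union[OF U(1), of x] by (simp only: topspace_euclidean mem_Collect_eq simp_thms UNIV_I)
  qed
  show "openin euclidean {x \<in> topspace euclidean. orbit \<Gamma> x \<in> U}" unfolding eq using U(2) open_openin by blast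
qed

lemma open_act_image: assumes r: "r \<in> \<Gamma>" and S: "open S" shows "open (aff_act r ` S)"
proof -
  obtain r' where r': "r' \<in> \<Gamma>" "\<And>x. aff_act r (aff_act r' x) = x" "\<And>x. aff_act r' (aff_act r x) = x"
    using inv_act[OF r] by blast
  have eq: "aff_act r ` S = (\<lambda>x. aff_act r' x) -` S"
  proof
    show "aff_act r ` S \<subseteq> (\<lambda>x. aff_act r' x) -` S" using r'(3) by auto
    show "(\<lambda>x. aff_act r' x) -` S \<subseteq> aff_act r ` S"
    proof
      fix y assume "y \<in> (\<lambda>x. aff_act r' x) -` S"
      hence "aff_act r' y \<in> S" by simp
      moreover have "y = aff_act r (aff_act r' y)" using r'(2) by simp
      ultimately show "y \<in> aff_act r ` S" by blast
    qed
  qed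
  have c: "continuous_on UNIV (\<lambda>x. aff_act r' x)" by (intro cont_act continuous_on_id)
  have "open ((\<lambda>x. aff_act r' x) -` S \<inter> UNIV)" using c S continuous_on_open_vimage[OF open_UNIV] by blast
  thus ?thesis using eq by simp
qed

lemma openin_O: assumes "open S" shows "openin (M_top \<Gamma>) (orbit \<Gamma> ` S)"
  unfolding openin_M
proof
  show "orbit \<Gamma> ` S \<subseteq> orbit_space \<Gamma>" using orbit_in_space by blast
  have "\<Union>(orbit \<Gamma> ` S) = (\<Union>r\<in>\<Gamma>. aff_act r ` S)" unfolding orbit_def by blast
  moreover have "open (\<Union>r\<in>\<Gamma>. aff_act r ` S)" using open_act_image assms by blast
  ultimately show "open (\<Union>(orbit \<Gamma> ` S))" by simp
qed

lemma dist_sc: "dist (sol_mult sc h) (sol_mult sc g) = dist h g"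
  by (cases h; cases g) (simp add: sc_mult dist_Pair_Pair dist_real_def)

lemma ball_homeo_UNIV:
  fixes v0 :: "real \<times> real" assumes "\<rho> > 0"
  shows "top_of_set (ball v0 \<rho>) homeomorphic_space (euclidean :: (real \<times> real) topology)"
proof -
  obtain f g where "homeomorphism (ball v0 \<rho>) (UNIV :: (real\<times>real) set) f g"
    using homeomorphic_ball_UNIV[OF assms, of v0] unfolding homeomorphic_def by blast
  hence "homeomorphic_maps (top_of_set (ball v0 \<rho>)) (top_of_set UNIV) f g"
    unfolding homeomorphism_def homeomorphic_maps_def by (auto simp: continuous_map_in_subtopology)
  thus ?thesis unfolding homeomorphic_space_def by auto
qed

end

context infra begin

lemma local_chart:
  assumes gF: "g \<in> Fx"
  shows "\<exists>U. openin (subtopology (M_top \<Gamma>) (connected_component_of_set (subtopology (M_top \<Gamma>) (fixed_set \<Gamma> sc)) (orbit \<Gamma> g))) U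
     \<and> orbit \<Gamma> g \<in> U \<and>
     subtopology (subtopology (M_top \<Gamma>) (connected_component_of_set (subtopology (M_top \<Gamma>) (fixed_set \<Gamma> sc)) (orbit \<Gamma> g))) U
        homeomorphic_space (euclidean :: (real \<times> real) topology)"
proof -
  define M where "M = M_top \<Gamma>"
  define FS where "FS = fixed_set \<Gamma> sc"
  define X where "X = subtopology M FS"
  define C where "C = connected_component_of_set X (orbit \<Gamma> g)"
  obtain p \<phi> \<pi> where p: "p \<in> \<Gamma>" "aff_act p g = sol_mult sc g" and cd: "chart_data p \<phi> \<pi>"
    using chart_exists[OF gF] by blast
  have c\<phi>: "continuous_on UNIV \<phi>" and c\<pi>: "continuous_on UNIV \<pi>" and \<pi>\<phi>: "\<And>v. \<pi> (\<phi> v) = v"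
    and \<phi>\<pi>: "\<And>h. aff_act p h = sol_mult sc h \<Longrightarrow> \<phi> (\<pi> h) = h" and \<phi>F: "\<And>v. aff_act p (\<phi> v) = sol_mult sc (\<phi> v)"
    using cd unfolding chart_data_def by auto
  obtain \<delta>1 where d1: "\<delta>1 > 0" "\<And>r h. r \<in> \<Gamma> \<Longrightarrow> dist h g < \<delta>1 \<Longrightarrow> dist (aff_act r h) g < \<delta>1 \<Longrightarrow> aff_act r g = g"
    using locdisc[of g g] by blast
  obtain \<delta>2 where d2: "\<delta>2 > 0" "\<And>r h. r \<in> \<Gamma> \<Longrightarrow> dist h g < \<delta>2 \<Longrightarrow> dist (aff_act r h) (sol_mult sc g) < \<delta>2 \<Longrightarrow> aff_act r g = sol_mult sc g"
    using locdisc[of g "sol_mult sc g"] by blast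
  define \<delta> where "\<delta> = min \<delta>1 \<delta>2"
  have d: "\<delta> > 0" using d1 d2 unfolding \<delta>_def by simp
  define B where "B = ball g \<delta>"
  have inj: "h' = h" if hh: "h \<in> B" "h' \<in> B" "h' \<in> orbit \<Gamma> h" for h h'
  proof -
    obtain r where r: "r \<in> \<Gamma>" "h' = aff_act r h" using hh(3) unfolding orbit_iff by blast
    have "dist h g < \<delta>1" "dist (aff_act r h) g < \<delta>1" using hh(1,2) r(2) unfolding B_def \<delta>_def
      by (auto simp: dist_commute)
    hence "aff_act r g = g" using d1(2)[OF r(1)] by blast
    hence "r = aff_one" using stab[OF r(1)] by blast
    thus ?thesis using r by simp
  qed
  have loc: "aff_act p h = sol_mult sc h" if hh: "h \<in> B" "h \<in> Fx" for h
  proof -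
    obtain p' where p': "p' \<in> \<Gamma>" "aff_act p' h = sol_mult sc h" using hh(2) unfolding Fx_def by blast
    have "dist h g < \<delta>2" using hh(1) unfolding B_def \<delta>_def by (auto simp: dist_commute)
    moreover have "dist (aff_act p' h) (sol_mult sc g) < \<delta>2" using p'(2) dist_sc[of h g] calculation by simp
    ultimately have p'g: "aff_act p' g = aff_act p g" using d2(2)[OF p'(1)] p(2) by simp
    obtain p'' where p'': "p'' \<in> \<Gamma>" "\<And>x. aff_act p (aff_act p'' x) = x" "\<And>x. aff_act p'' (aff_act p x) = x"
      using inv_act[OF p(1)] by blast
    define t where "t = aff_mult p'' p'"
    have tG: "t \<in> \<Gamma>" unfolding t_def using mult p''(1) p'(1) by blast
    have "aff_act t g = g" unfolding t_def actm[OF p''(1) p'(1)] p'g p''(3) ..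
    hence t1: "t = aff_one" using stab[OF tG] by blast
    have "aff_act p' h = aff_act p (aff_act t h)" unfolding t_def actm[OF p''(1) p'(1)] p''(2) ..
    thus ?thesis using t1 p'(2) by simp
  qed
  define v0 where "v0 = \<pi> g"
  have \<phi>v0: "\<phi> v0 = g" unfolding v0_def using \<phi>\<pi>[OF p(2)] .
  obtain \<rho> where rho: "\<rho> > 0" "\<And>v. dist v v0 < \<rho> \<Longrightarrow> dist (\<phi> v) (\<phi> v0) < \<delta>"
    using c\<phi> d unfolding continuous_on_iff by (metis UNIV_I)
  define Bp where "Bp = ball v0 \<rho>"
  have \<phi>B: "\<phi> v \<in> B" if "v \<in> Bp" for v
    using rho(2)[of v] that \<phi>v0 unfolding Bp_def B_def by (auto simp: dist_commute)
  define Op where "Op V = orbit \<Gamma> ` (B \<inter> \<pi> -` V)" for V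
  have openO: "openin M (Op V)" if "open V" for V
  proof -
    have "open (\<pi> -` V \<inter> UNIV)" using c\<pi> that continuous_on_open_vimage[OF open_UNIV] by blast
    hence "open (B \<inter> \<pi> -` V)" unfolding B_def by (simp add: open_Int)
    thus ?thesis unfolding Op_def M_def by (rule openin_O)
  qed
  define \<psi> where "\<psi> = orbit \<Gamma> \<circ> \<phi>"
  define U where "U = \<psi> ` Bp"
  have FS_eq: "FS = orbit \<Gamma> ` Fx" unfolding FS_def by (rule fixed_set_eq)
  have UFS: "U \<subseteq> FS" unfolding U_def FS_eq \<psi>_def Fx_def using \<phi>F p(1) by auto
  have key_img: "\<psi> ` V = U \<inter> Op V" if "V \<subseteq> Bp" for V
  proof
    show "\<psi> ` V \<subseteq> U \<inter> Op V"
    proof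
      fix P assume "P \<in> \<psi> ` V"
      then obtain v where v: "v \<in> V" "P = \<psi> v" by blast
      have "\<phi> v \<in> B \<inter> \<pi> -` V" using \<phi>B[of v] that v(1) \<pi>\<phi> by auto
      hence "P \<in> Op V" unfolding Op_def v(2) \<psi>_def by auto
      moreover have "P \<in> U" unfolding U_def using v that by blast
      ultimately show "P \<in> U \<inter> Op V" by blast
    qed
    show "U \<inter> Op V \<subseteq> \<psi> ` V"
    proof
      fix P assume P: "P \<in> U \<inter> Op V"
      then obtain v where v: "v \<in> Bp" "P = orbit \<Gamma> (\<phi> v)" unfolding U_def \<psi>_def by auto
      obtain w where w: "w \<in> B" "\<pi> w \<in> V" "P = orbit \<Gamma> w" using P unfolding Op_def by auto
      have "w \<in> orbit \<Gamma> (\<phi> v)" using v(2) w(3) orbit_eq_iff by metis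
      hence "w = \<phi> v" using inj[OF \<phi>B[OF v(1)] w(1)] by simp
      hence "v \<in> V" using w(2) \<pi>\<phi> by metis
      thus "P \<in> \<psi> ` V" using v(2) unfolding \<psi>_def by auto
    qed
  qed
  have key_C: "Op Bp \<inter> FS \<subseteq> U"
  proof
    fix P assume P: "P \<in> Op Bp \<inter> FS"
    then obtain w where w: "w \<in> B" "\<pi> w \<in> Bp" "P = orbit \<Gamma> w" unfolding Op_def by auto
    have "w \<in> Fx" using P w(3) fixed_iff unfolding FS_def by blast
    hence "\<phi> (\<pi> w) = w" using \<phi>\<pi> loc w(1) by blast
    thus "P \<in> U" unfolding U_def \<psi>_def using w by (metis comp_apply image_eqI)
  qed
  have UO: "U \<subseteq> Op Bp" using key_img[of Bp] unfolding U_def by blast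
  have cont\<phi>: "continuous_map (top_of_set Bp) euclidean \<phi>"
    using c\<phi> continuous_on_subset by (simp add: continuous_on_subset[OF c\<phi>])
  have cont\<psi>: "continuous_map (top_of_set Bp) M \<psi>"
    unfolding \<psi>_def M_def using continuous_map_compose[OF cont\<phi> cont_orbit] .
  have contX: "continuous_map (top_of_set Bp) X \<psi>"
    unfolding X_def continuous_map_in_subtopology using cont\<psi> UFS unfolding U_def by auto
  have "connectedin (top_of_set Bp) Bp" unfolding connectedin_subtopology Bp_def by simp
  hence "connectedin X (\<psi> ` Bp)" using connectedin_continuous_map_image[OF contX] by blast
  moreover have "orbit \<Gamma> g \<in> U" unfolding U_def \<psi>_def Bp_def using \<phi>v0 rho(1) by force
  ultimately have UC: "U \<subseteq> C" unfolding C_def U_def using connected_component_of_maximal by metis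
  have CFS: "C \<subseteq> FS" unfolding C_def X_def using connected_component_of_subset_topspace by fastforce
  have openU: "openin (subtopology M C) U"
    unfolding openin_subtopology
  proof (intro exI conjI)
    show "openin M (Op Bp)" using openO unfolding Bp_def by simp
    show "U = Op Bp \<inter> C" using UO UC key_C CFS by blast
  qed
  have UM: "U \<subseteq> topspace M" unfolding M_def topspace_M U_def \<psi>_def comp_def using orbit_in_space by blast
  have hm: "homeomorphic_map (top_of_set Bp) (subtopology M U) \<psi>"
  proof (rule bijective_open_imp_homeomorphic_map)
    show "continuous_map (top_of_set Bp) (subtopology M U) \<psi>"
      unfolding continuous_map_in_subtopology using cont\<psi> unfolding U_def by auto
    show "open_map (top_of_set Bp) (subtopology M U) \<psi>"
      unfolding open_map_def
    proof (intro allI impI)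
      fix V assume "openin (top_of_set Bp) V"
      hence V: "open V" "V \<subseteq> Bp" using openin_open_eq[of Bp V] unfolding Bp_def by auto
      show "openin (subtopology M U) (\<psi> ` V)" unfolding openin_subtopology
        using openO[OF V(1)] key_img[OF V(2)] by blast
    qed
    show "\<psi> ` topspace (top_of_set Bp) = topspace (subtopology M U)" using UM unfolding U_def by auto
    show "inj_on \<psi> (topspace (top_of_set Bp))"
    proof (rule inj_onI)
      fix v v' assume vv: "v \<in> topspace (top_of_set Bp)" "v' \<in> topspace (top_of_set Bp)" "\<psi> v = \<psi> v'"
      hence "\<phi> v' \<in> orbit \<Gamma> (\<phi> v)" unfolding \<psi>_def using orbit_eq_iff by (metis comp_apply)
      hence "\<phi> v' = \<phi> v" using inj \<phi>B vv(1,2) by auto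
      thus "v = v'" using \<pi>\<phi> by metis
    qed
  qed
  have "subtopology (subtopology M C) U = subtopology M U"
    using UC by (simp add: subtopology_subtopology Int_absorb1)
  moreover have "subtopology M U homeomorphic_space (euclidean :: (real \<times> real) topology)"
  proof -
    have "subtopology M U homeomorphic_space top_of_set Bp"
      using homeomorphic_space_sym homeomorphic_map_imp_homeomorphic_space[OF hm] by blast
    moreover have "top_of_set Bp homeomorphic_space (euclidean :: (real \<times> real) topology)"
      unfolding Bp_def by (rule ball_homeo_UNIV[OF rho(1)])
    ultimately show ?thesis by (rule homeomorphic_space_trans)
  qed
  ultimately show ?thesis using openU \<open>orbit \<Gamma> g \<in> U\<close> unfolding C_def X_def M_def FS_def by metis
qed

lemma main_components:
  "\<forall>C \<in> connected_components_of (subtopology (M_top \<Gamma>) (fixed_set \<Gamma> sc)).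
            two_dimensional (subtopology (M_top \<Gamma>) C)"
proof
  define X where "X = subtopology (M_top \<Gamma>) (fixed_set \<Gamma> sc)"
  fix C assume "C \<in> connected_components_of (subtopology (M_top \<Gamma>) (fixed_set \<Gamma> sc))"
  then obtain P0 where P0: "P0 \<in> topspace X" "C = connected_component_of_set X P0"
    unfolding connected_components_of_def X_def by blast
  show "two_dimensional (subtopology (M_top \<Gamma>) C)" unfolding two_dimensional_def
  proof
    fix P assume "P \<in> topspace (subtopology (M_top \<Gamma>) C)"
    hence PC: "P \<in> C" by simp
    hence "P \<in> topspace X" using P0(2) connected_component_of_subset_topspace[of X P0] by (metis subsetD)
    hence "P \<in> fixed_set \<Gamma> sc" unfolding X_def by simp
    then obtain g where g: "g \<in> Fx" "P = orbit \<Gamma> g" using fixed_set_eq by auto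
    have "connected_component_of X P0 P" using PC P0(2) by simp
    hence "connected_component_of X P0 = connected_component_of X P"
      using connected_component_of_equiv by metis
    hence CP: "C = connected_component_of_set X (orbit \<Gamma> g)" using P0(2) g(2) by simp
    show "\<exists>U. openin (subtopology (M_top \<Gamma>) C) U \<and> P \<in> U \<and>
        subtopology (subtopology (M_top \<Gamma>) C) U homeomorphic_space (euclidean :: (real \<times> real) topology)"
      using local_chart[OF g(1)] unfolding CP X_def g(2) .
  qed
qed

end

theorem corollary8p3:
  fixes \<Gamma> :: "aff set" and q :: real
  assumes "infra_sol_group \<Gamma>"
    and "q > 0"
    and "\<Gamma> \<inter> {(central z, mat2_one) | z. True} = {(central (of_int k / q), mat2_one) | k. True}"
  shows "fixed_set \<Gamma> (central (1 / (2 * q))) = {} \<or>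
         (\<forall>C \<in> connected_components_of (subtopology (M_top \<Gamma>) (fixed_set \<Gamma> (central (1 / (2 * q))))).
            two_dimensional (subtopology (M_top \<Gamma>) C))"
proof -
  interpret infra \<Gamma> q using assms by (rule infra.intro)
  have "central (1 / (2 * q)) = sc" by (simp add: sc_def)
  thus ?thesis using main_components by simp
qed


end
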